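(* Let $G$ be a finite simple graph with $n$ vertices and minimum degree $\delta \ge 24{,}000$. Then $$\gamma_s(G) \le \frac{\sqrt{6.8\ln(\delta+1)} + 0.32}{\sqrt{\delta+1}}\, n.$$
   Context: For a vertex $v$ of $G$, $N[v]$ denotes the closed neighbourhood of $v$ (i.e. $v$ together with its neighbours). A signed domination function of $G$ is a function $f: V(G) \to \{-1, 1\}$ such that $\sum_{x \in N[v]} f(x) \ge 1$ for every vertex $v \in V(G)$. The weight of $f$ is $f(V(G)) = \sum_{v \in V(G)} f(v)$. The signed domination number $\gamma_s(G)$ is the minimum weight of a signed domination function of $G$. *)

theory Defs
  imports Complex_Main
begin

definition simple_graph :: "'a set \<Rightarrow> ('a \<Rightarrow> 'a \<Rightarrow> bool) \<Rightarrow> bool" where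
  "simple_graph V E \<longleftrightarrow> finite V \<and> (\<forall>x y. E x y \<longrightarrow> x \<in> V \<and> y \<in> V)
     \<and> (\<forall>x y. E x y \<longrightarrow> E y x) \<and> (\<forall>x. \<not> E x x)"

definition neighbours :: "'a set \<Rightarrow> ('a \<Rightarrow> 'a \<Rightarrow> bool) \<Rightarrow> 'a \<Rightarrow> 'a set" where
  "neighbours V E v = {u \<in> V. E v u}"

definition closed_nbhd :: "'a set \<Rightarrow> ('a \<Rightarrow> 'a \<Rightarrow> bool) \<Rightarrow> 'a \<Rightarrow> 'a set" where
  "closed_nbhd V E v = insert v (neighbours V E v)"

definition degree :: "'a set \<Rightarrow> ('a \<Rightarrow> 'a \<Rightarrow> bool) \<Rightarrow> 'a \<Rightarrow> nat" where
  "degree V E v = card (neighbours V E v)"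

definition min_degree :: "'a set \<Rightarrow> ('a \<Rightarrow> 'a \<Rightarrow> bool) \<Rightarrow> nat" where
  "min_degree V E = Min (degree V E ` V)"

definition signed_dom_fun :: "'a set \<Rightarrow> ('a \<Rightarrow> 'a \<Rightarrow> bool) \<Rightarrow> ('a \<Rightarrow> int) \<Rightarrow> bool" where
  "signed_dom_fun V E f \<longleftrightarrow> (\<forall>v\<in>V. f v \<in> {-1, 1})
     \<and> (\<forall>v\<in>V. (\<Sum>x\<in>closed_nbhd V E v. f x) \<ge> 1)"

definition signed_domination_number :: "'a set \<Rightarrow> ('a \<Rightarrow> 'a \<Rightarrow> bool) \<Rightarrow> int" where
  "signed_domination_number V E =
     (LEAST w. \<exists>f. signed_dom_fun V E f \<and> w = (\<Sum>v\<in>V. f v))"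

end

theory Submission
  imports Defs
begin

lemma sdn_le:
  assumes fin: "finite V" and sd: "signed_dom_fun V E f"
  shows "signed_domination_number V E \<le> (\<Sum>v\<in>V. f v)"
proof -
  define W where "W = {w. \<exists>f. signed_dom_fun V E f \<and> w = (\<Sum>v\<in>V. f v)}"
  have sub: "W \<subseteq> {- int (card V) .. int (card V)}"
  proof
    fix w assume "w \<in> W"
    then obtain g where g: "signed_dom_fun V E g" "w = (\<Sum>v\<in>V. g v)" unfolding W_def by auto
    have b: "\<And>v. v \<in> V \<Longrightarrow> -1 \<le> g v \<and> g v \<le> 1" using g(1) unfolding signed_dom_fun_def by fastforce
    have "(\<Sum>v\<in>V. g v) \<le> (\<Sum>v\<in>V. 1)" by (rule sum_mono) (use b in auto)
    moreover have "(\<Sum>v\<in>V. -1) \<le> (\<Sum>v\<in>V. g v)" by (rule sum_mono) (use b in auto)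
    ultimately show "w \<in> {- int (card V) .. int (card V)}" using g(2) by simp
  qed
  have finW: "finite W" using sub finite_subset by blast
  have inW: "(\<Sum>v\<in>V. f v) \<in> W" using sd unfolding W_def by auto
  hence ne: "W \<noteq> {}" by auto
  have "signed_domination_number V E = Min W"
    unfolding signed_domination_number_def W_def[symmetric]
  proof (rule Least_equality)
    show "\<exists>f. signed_dom_fun V E f \<and> Min W = (\<Sum>v\<in>V. f v)"
      using Min_in[OF finW ne] unfolding W_def by auto
  next
    fix y assume "\<exists>f. signed_dom_fun V E f \<and> y = (\<Sum>v\<in>V. f v)"
    hence "y \<in> W" unfolding W_def by auto
    thus "Min W \<le> y" using finW by simp
  qed
  thus ?thesis using finW inW by simp
qed


lemma fix_lemma:
  assumes sg: "simple_graph V E" and SV: "S \<subseteq> V"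
  defines "g \<equiv> (\<lambda>x. if x \<in> S then 1 else -1 :: int)"
  defines "s \<equiv> (\<lambda>v. \<Sum>x\<in>closed_nbhd V E v. g x)"
  shows "\<exists>f. signed_dom_fun V E f \<and>
           (\<Sum>v\<in>V. f v) \<le> (\<Sum>v\<in>V. g v) + (\<Sum>v\<in>V. if s v \<le> 0 then 2 - s v else 0)"
proof -
  have finV: "finite V" using sg unfolding simple_graph_def by auto
  have NV: "\<And>v. v \<in> V \<Longrightarrow> closed_nbhd V E v \<subseteq> V"
    unfolding closed_nbhd_def neighbours_def by auto
  have finN: "\<And>v. finite (closed_nbhd V E v)"
    using finV unfolding closed_nbhd_def neighbours_def by auto
  define M where "M = (\<lambda>v. {x\<in>closed_nbhd V E v. g x = -1})"
  define k where "k = (\<lambda>v. if s v \<le> 0 then nat ((2 - s v) div 2) else 0)"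
  have sM: "s v = int (card (closed_nbhd V E v)) - 2 * int (card (M v))" for v
  proof -
    let ?N = "closed_nbhd V E v"
    have "s v = (\<Sum>x\<in>?N. if x \<in> S then 1 else -1)" unfolding s_def g_def by simp
    also have "\<dots> = int (card (?N \<inter> S)) - int (card (?N - S))"
      using finN[of v] by (simp add: sum.If_cases Diff_eq)
    also have "card (?N \<inter> S) + card (?N - S) = card ?N"
      using finN[of v] by (metis card_Int_Diff)
    moreover have "M v = ?N - S" unfolding M_def g_def by auto
    ultimately show ?thesis by (smt (verit) of_nat_add)
  qed
  have vN: "v \<in> closed_nbhd V E v" for v unfolding closed_nbhd_def by auto
  have kM: "k v \<le> card (M v)" for v
  proof (cases "s v \<le> 0")
    case True
    have "card (closed_nbhd V E v) \<ge> 1" using finN[of v] vN[of v]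
      by (metis One_nat_def Suc_leI card_gt_0_iff empty_iff)
    then show ?thesis using True sM[of v] unfolding k_def by auto
  qed (simp add: k_def)
  have "\<forall>v. \<exists>F. F \<subseteq> M v \<and> card F = k v"
    using kM by (meson obtain_subset_with_card_n)
  then obtain F where F: "\<And>v. F v \<subseteq> M v" "\<And>v. card (F v) = k v" by metis
  define T where "T = (\<Union>v\<in>V. F v)"
  have TV: "T \<subseteq> V" using F(1) NV unfolding T_def M_def by blast
  have Tg: "x \<in> T \<Longrightarrow> g x = -1" for x using F(1) unfolding T_def M_def by blast
  define f where "f = (\<lambda>x. g x + (if x \<in> T then 2 else 0))"
  have sumf: "finite A \<Longrightarrow> (\<Sum>x\<in>A. f x) = (\<Sum>x\<in>A. g x) + 2 * int (card (A \<inter> T))" for A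
    unfolding f_def by (simp add: sum.distrib sum.If_cases)
  have finT: "finite T" using TV finV finite_subset by blast
  have cardT: "card T \<le> (\<Sum>v\<in>V. k v)"
    unfolding T_def using card_UN_le[OF finV, of F] F(2) by simp
  have sdf: "signed_dom_fun V E f"
    unfolding signed_dom_fun_def
  proof (intro conjI ballI)
    fix v assume "v \<in> V"
    show "f v \<in> {-1, 1}" unfolding f_def g_def using Tg[of v] g_def by (auto split: if_splits)
  next
    fix v assume v: "v \<in> V"
    let ?N = "closed_nbhd V E v"
    have "F v \<subseteq> ?N \<inter> T" using F(1) v unfolding T_def M_def by blast
    hence "card (F v) \<le> card (?N \<inter> T)" using finN[of v] by (meson card_mono finite_Int)
    hence le: "int (k v) \<le> int (card (?N \<inter> T))" using F(2) by simp
    have "s v + 2 * int (k v) \<ge> 1" unfolding k_def by auto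
    thus "1 \<le> (\<Sum>x\<in>?N. f x)" using sumf[OF finN[of v]] le unfolding s_def by linarith
  qed
  have "(\<Sum>v\<in>V. f v) = (\<Sum>v\<in>V. g v) + 2 * int (card T)"
    using sumf[OF finV] TV by (simp add: Int_absorb1)
  also have "2 * int (card T) \<le> (\<Sum>v\<in>V. 2 * int (k v))"
    using cardT by (simp add: sum_distrib_left[symmetric] flip: of_nat_sum)
  also have "\<dots> \<le> (\<Sum>v\<in>V. if s v \<le> 0 then 2 - s v else 0)"
    by (rule sum_mono) (auto simp: k_def)
  finally show ?thesis using sdf by auto
qed


definition wt :: "real \<Rightarrow> 'a set \<Rightarrow> 'a set \<Rightarrow> real" where
  "wt p V S = (\<Prod>x\<in>S. p) * (\<Prod>x\<in>V - S. 1 - p)"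

lemma expect_prod:
  fixes \<phi> :: "'a \<Rightarrow> bool \<Rightarrow> real"
  assumes fin: "finite V"
  shows "(\<Sum>S\<in>Pow V. wt p V S * (\<Prod>x\<in>V. \<phi> x (x \<in> S)))
         = (\<Prod>x\<in>V. p * \<phi> x True + (1 - p) * \<phi> x False)"
proof -
  have "(\<Prod>x\<in>V. p * \<phi> x True + (1 - p) * \<phi> x False)
      = (\<Sum>X\<in>Pow V. (\<Prod>x\<in>X. p * \<phi> x True) * (\<Prod>x\<in>V - X. (1 - p) * \<phi> x False))"
    by (rule prod_add[OF fin])
  also have "\<dots> = (\<Sum>S\<in>Pow V. wt p V S * (\<Prod>x\<in>V. \<phi> x (x \<in> S)))"
  proof (rule sum.cong[OF refl])
    fix X assume "X \<in> Pow V"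
    hence XV: "X \<subseteq> V" by auto
    have fX: "finite X" using XV fin finite_subset by blast
    have "(\<Prod>x\<in>V. \<phi> x (x \<in> X)) = (\<Prod>x\<in>X. \<phi> x (x \<in> X)) * (\<Prod>x\<in>V - X. \<phi> x (x \<in> X))"
      using XV fin by (metis prod.subset_diff mult.commute)
    also have "\<dots> = (\<Prod>x\<in>X. \<phi> x True) * (\<Prod>x\<in>V - X. \<phi> x False)"
      by (intro arg_cong2[where f="(*)"] prod.cong) auto
    finally show "(\<Prod>x\<in>X. p * \<phi> x True) * (\<Prod>x\<in>V - X. (1 - p) * \<phi> x False)
        = wt p V X * (\<Prod>x\<in>V. \<phi> x (x \<in> X))"
      unfolding wt_def by (simp add: prod.distrib)
  qed
  finally show ?thesis by simp
qed

lemma wt_sum: "finite V \<Longrightarrow> (\<Sum>S\<in>Pow V. wt p V S) = 1"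
  using expect_prod[of V p "\<lambda>_ _. 1"] by simp

lemma wt_pos: "0 < p \<Longrightarrow> p < 1 \<Longrightarrow> 0 < wt p V S"
  unfolding wt_def by (intro mult_pos_pos prod_pos) auto

lemma exists_le_avg:
  fixes h :: "'a set \<Rightarrow> real"
  assumes fin: "finite V" and p: "0 < p" "p < 1"
    and avg: "(\<Sum>S\<in>Pow V. wt p V S * h S) \<le> B"
  shows "\<exists>S\<subseteq>V. h S \<le> B"
proof (rule ccontr)
  assume "\<not> ?thesis"
  hence gt: "\<And>S. S \<in> Pow V \<Longrightarrow> B < h S" by auto
  have "(\<Sum>S\<in>Pow V. wt p V S * B) < (\<Sum>S\<in>Pow V. wt p V S * h S)"
    using fin gt wt_pos[OF p] by (intro sum_strict_mono) (auto intro!: mult_strict_left_mono)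
  also have "(\<Sum>S\<in>Pow V. wt p V S * B) = B" using wt_sum[OF fin]
    by (simp add: sum_distrib_right[symmetric])
  finally show False using avg by simp
qed


lemma q_bound:
  fixes y :: real assumes y: "0 < y" "y \<le> 1/5"
  shows "(1 + y) / 2 * exp (- y) + (1 - (1 + y) / 2) * exp y \<le> 1 - y^2 / 6"
proof -
  have e1: "1 + y + y^2/2 \<le> exp y" using exp_lower_Taylor_quadratic y by simp
  have e2: "exp y \<le> 1 + y + y^2" using exp_bound y by simp
  have "0 \<le> y^2/2" by simp
  hence pos: "0 < 1 + y + y^2/2" using y by linarith
  have "exp (-y) \<le> 1 / (1 + y + y^2/2)"
    using e1 pos by (simp add: exp_minus field_simps)
  hence a: "(1 + y) / 2 * exp (- y) \<le> (1 + y) / 2 / (1 + y + y^2/2)"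
  proof -
    have "(1 + y) / 2 * exp (- y) \<le> (1 + y) / 2 * (1 / (1 + y + y^2/2))"
      using \<open>exp (-y) \<le> _\<close> y by (intro mult_left_mono) auto
    thus ?thesis by simp
  qed
  have "(1 - y)/2 * exp y \<le> (1 - y)/2 * (1 + y + y^2)"
    using e2 y by (intro mult_left_mono) auto
  moreover have eq: "1 - (1 + y) / 2 = (1 - y)/2" by (simp add: field_simps)
  ultimately have b: "(1 - (1 + y) / 2) * exp y \<le> (1 - y)/2 * (1 + y + y^2)" by (simp only: eq)
  have y3: "y^3 \<le> y^2 / 5" using y mult_left_mono[of y "1/5" "y^2"]
    by (simp add: power3_eq_cube power2_eq_square mult.assoc)
  have y4: "y^4 \<le> y^2 / 25"
  proof -
    have "y^4 = y^2 * y^2" by (simp add: numeral_eq_Suc)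
    also have "\<dots> \<le> y^2 * (1/25)"
    proof (rule mult_left_mono)
      have "y * y \<le> (1/5) * (1/5)" using y by (intro mult_mono) auto
      thus "y^2 \<le> 1/25" by (simp add: power2_eq_square)
    qed simp
    finally show ?thesis by simp
  qed
  have y3p: "0 \<le> y^3" using y by simp
  have e3: "(1/2 - y^2/5) * (1 + y + y^2/2) = 1/2 + y/2 + y^2/20 - y^3/5 - y^4/10"
    by (simp add: algebra_simps power2_eq_square power3_eq_cube numeral_eq_Suc)
  have e4: "(1 - y)/2 * (1 + y + y^2) = 1/2 - y^3/2"
    by (simp add: field_simps power2_eq_square power3_eq_cube)
  have c1: "(1 + y) / 2 \<le> (1/2 - y^2/5) * (1 + y + y^2/2)"
    unfolding e3 using y3 y4 zero_le_power2[of y] by argo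
  have c2: "(1 + y) / 2 / (1 + y + y^2/2) \<le> 1/2 - y^2/5"
    using c1 pos_divide_le_eq[OF pos] by blast
  have c: "(1 + y) / 2 / (1 + y + y^2/2) + (1 - y)/2 * (1 + y + y^2) \<le> 1 - y^2/6"
    using c2 e4 y3p zero_le_power2[of y] by linarith
  show ?thesis using a b c by linarith
qed

lemma lin_exp: fixes y z :: real assumes "0 < y" shows "max 0 z \<le> exp (y * z - 1) / y"
proof -
  have "y * z \<le> exp (y * z - 1)" using exp_ge_add_one_self[of "y*z - 1"] by simp
  hence "z \<le> exp (y * z - 1) / y" using assms by (simp add: le_divide_eq mult.commute)
  moreover have "0 \<le> exp (y * z - 1) / y" using assms by simp
  ultimately show ?thesis by simp
qed

lemma ln_small: fixes D :: real assumes "24001 \<le> D" shows "170 * ln D \<le> D"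
proof -
  define r where "r = sqrt (sqrt D)"
  have Dpos: "0 < D" using assms by simp
  have rpos: "0 < r" unfolding r_def using Dpos by simp
  have r2: "r^2 = sqrt D" unfolding r_def using Dpos by simp
  have "r^4 = (r^2)^2" by (simp add: numeral_eq_Suc)
  hence r4: "r^4 = D" using r2 Dpos by simp
  have lnD: "ln D = 4 * ln r" unfolding r_def using Dpos by (simp add: ln_sqrt)
  have "ln r \<le> r - 1" using rpos by (rule ln_le_minus_one)
  have r9: "9 \<le> r"
  proof (rule ccontr)
    assume "\<not> 9 \<le> r"
    hence "r^4 \<le> 9^4" using rpos by (intro power_mono) auto
    thus False using r4 assms by simp
  qed
  have "680 * r \<le> r^4"
  proof -
    have "680 \<le> r^3" using power_mono[OF r9, of 3] by simp
    hence "680 * r \<le> r^3 * r" using rpos by simp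
    moreover have "r^3 * r = r^4" by (simp add: numeral_eq_Suc)
    ultimately show ?thesis by simp
  qed
  thus ?thesis using lnD \<open>ln r \<le> r - 1\<close> r4 by linarith
qed

lemma ln_big: fixes D :: real assumes "24001 \<le> D" shows "2 \<le> ln D"
proof -
  have "exp (2::real) = exp 1 ^ 2" using exp_double[of 1] by simp
  also have "\<dots> \<le> 3^2" using exp_le by (intro power_mono) auto
  finally have "exp 2 \<le> D" using assms by simp
  thus ?thesis using assms by (metis exp_le_cancel_iff exp_ln less_le_trans zero_less_numeral)
qed


theorem corollary1:
  fixes V :: "'a set" and E :: "'a \<Rightarrow> 'a \<Rightarrow> bool"
  assumes "simple_graph V E"
    and "V \<noteq> {}"
    and "min_degree V E \<ge> 24000"
  shows "real_of_int (signed_domination_number V E)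
     \<le> (sqrt (6.8 * ln (real (min_degree V E) + 1)) + 0.32)
         / sqrt (real (min_degree V E) + 1) * real (card V)"
proof -
  note sg = assms(1)
  have finV: "finite V" using sg unfolding simple_graph_def by auto
  define \<delta> where "\<delta> = min_degree V E"
  define D where "D = real \<delta> + 1"
  define L where "L = ln D"
  define a where "a = sqrt (6.8 * L)"
  define y where "y = a / sqrt D"
  define p where "p = (1 + y) / 2"
  define q where "q = p * exp (- y) + (1 - p) * exp y"
  have D24: "24001 \<le> D" unfolding D_def \<delta>_def using assms(3) by simp
  have Dpos: "0 < D" using D24 by simp
  have L2: "2 \<le> L" unfolding L_def using ln_big[OF D24] .
  have L170: "170 * L \<le> D" unfolding L_def using ln_small[OF D24] .
  have a2: "a^2 = 6.8 * L" unfolding a_def using L2 by simp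
  have apos: "0 < a" unfolding a_def using L2 by simp
  have a3: "1 / 0.32 \<le> a"
  proof -
    have "(1/0.32::real)^2 \<le> a^2" using a2 L2 by (simp add: power2_eq_square)
    thus ?thesis using apos by (meson abs_le_square_iff abs_of_pos less_le_trans order.refl power2_le_imp_le zero_le_divide_1_iff less_le)
  qed
  have sD: "sqrt D * sqrt D = D" using Dpos by simp
  have sDpos: "0 < sqrt D" using Dpos by simp
  have ypos: "0 < y" unfolding y_def using apos sDpos by simp
  have y2: "y^2 * D = 6.8 * L"
    unfolding y_def using a2 Dpos by (simp add: power_divide)
  have y5: "y \<le> 1/5"
  proof -
    have "y^2 * D \<le> D / 25" using y2 L170 by linarith
    hence "y^2 * D \<le> (1/5)^2 * D" by (simp add: power2_eq_square)
    hence "y^2 \<le> (1/5)^2" using Dpos by simp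
    thus ?thesis using ypos by (meson power2_le_imp_le zero_le_divide_1_iff zero_le_numeral)
  qed
  have p01: "0 < p" "p < 1" unfolding p_def using ypos y5 by auto
  have qb: "q \<le> 1 - y^2/6" unfolding q_def p_def using q_bound[OF ypos y5] .
  have q0: "0 \<le> q" unfolding q_def using p01 by (intro add_nonneg_nonneg mult_nonneg_nonneg) auto
  have q1: "q \<le> 1" using qb zero_le_power2[of y] by linarith
  have NV: "\<And>v. v \<in> V \<Longrightarrow> closed_nbhd V E v \<subseteq> V"
    unfolding closed_nbhd_def neighbours_def by auto
  have finN: "\<And>v. finite (closed_nbhd V E v)"
    using finV unfolding closed_nbhd_def neighbours_def by auto
  have cardN: "\<delta> + 1 \<le> card (closed_nbhd V E v)" if v: "v \<in> V" for v
  proof -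
    have "\<delta> \<le> degree V E v" unfolding \<delta>_def min_degree_def using v finV by simp
    moreover have "v \<notin> neighbours V E v" using sg unfolding simple_graph_def neighbours_def by auto
    moreover have "finite (neighbours V E v)" using finV unfolding neighbours_def by simp
    ultimately show ?thesis unfolding closed_nbhd_def degree_def by simp
  qed
  define gi :: "'a set \<Rightarrow> 'a \<Rightarrow> int" where "gi = (\<lambda>S x. if x \<in> S then 1 else -1)"
  define s where "s = (\<lambda>S v. \<Sum>x\<in>closed_nbhd V E v. gi S x)"
  define c where "c = (\<lambda>S v. if s S v \<le> 0 then 2 - s S v else 0)"
  define h where "h = (\<lambda>S. real_of_int ((\<Sum>v\<in>V. gi S v) + (\<Sum>v\<in>V. c S v)))"
  define B where "B = (a + 0.32) / sqrt D * real (card V)"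
  have wt0: "\<And>S. 0 \<le> wt p V S" using wt_pos[OF p01] less_imp_le by blast
  have per_v: "(\<Sum>S\<in>Pow V. wt p V S * (real_of_int (gi S v) + real_of_int (c S v)))
      \<le> (a + 0.32) / sqrt D" if v: "v \<in> V" for v
  proof -
    have i: "(\<Sum>S\<in>Pow V. wt p V S * real_of_int (gi S v)) = y"
    proof -
      have "(\<Sum>S\<in>Pow V. wt p V S * real_of_int (gi S v))
         = (\<Sum>S\<in>Pow V. wt p V S * (\<Prod>x\<in>V. (\<lambda>x b. if x = v then (if b then 1 else -1) else 1) x (x \<in> S)))"
        using finV v by (intro sum.cong refl) (simp add: gi_def prod.delta)
      also have "\<dots> = (\<Prod>x\<in>V. p * (if x = v then (if True then 1 else -1) else 1) + (1 - p) * (if x = v then (if False then 1 else -1) else 1))"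
        by (rule expect_prod[OF finV, where \<phi>="\<lambda>x b. if x = v then (if b then 1 else -1) else 1"])
      also have "\<dots> = (\<Prod>x\<in>V. if x = v then p - (1 - p) else (1::real))"
        by (intro prod.cong refl) (auto simp: algebra_simps)
      also have "\<dots> = p - (1 - p)" using finV v by simp
      also have "\<dots> = y" unfolding p_def by (simp add: field_simps)
      finally show ?thesis .
    qed
    have ii: "(\<Sum>S\<in>Pow V. wt p V S * real_of_int (c S v)) \<le> 0.32 / sqrt D"
    proof -
      let ?N = "closed_nbhd V E v"
      have restr: "(\<Prod>x\<in>V. if x \<in> ?N then F x else 1) = (\<Prod>x\<in>?N. F x)" for F :: "'a \<Rightarrow> real"
        using prod.inter_restrict[OF finV, of F ?N] Int_absorb1[OF NV[OF v]] by (simp add: Int_commute)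
      have "(\<Sum>S\<in>Pow V. wt p V S * real_of_int (c S v))
          \<le> (\<Sum>S\<in>Pow V. wt p V S * (exp (2*y - 1) / y *
               (\<Prod>x\<in>V. (\<lambda>x b. if x \<in> ?N then exp (- y * (if b then 1 else -1)) else 1) x (x \<in> S))))"
      proof (rule sum_mono)
        fix S assume "S \<in> Pow V"
        have "real_of_int (c S v) \<le> max 0 (2 - real_of_int (s S v))" unfolding c_def by auto
        also have "\<dots> \<le> exp (y * (2 - real_of_int (s S v)) - 1) / y" by (rule lin_exp[OF ypos])
        also have "exp (y * (2 - real_of_int (s S v)) - 1) = exp (2*y - 1) * exp (- y * real_of_int (s S v))"
          by (simp add: exp_add[symmetric] algebra_simps)
        also have "exp (- y * real_of_int (s S v)) = (\<Prod>x\<in>?N. exp (- y * real_of_int (gi S x)))"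
          unfolding s_def by (simp add: sum_distrib_left exp_sum[OF finN])
        also have "\<dots> = (\<Prod>x\<in>V. (\<lambda>x b. if x \<in> ?N then exp (- y * (if b then 1 else -1)) else 1) x (x \<in> S))"
          unfolding restr by (intro prod.cong refl) (simp add: gi_def)
        finally show "wt p V S * real_of_int (c S v) \<le> wt p V S * (exp (2*y - 1) / y *
               (\<Prod>x\<in>V. (\<lambda>x b. if x \<in> ?N then exp (- y * (if b then 1 else -1)) else 1) x (x \<in> S)))"
          using wt0 by (intro mult_left_mono) (auto simp: mult.commute)
      qed
      also have "\<dots> = exp (2*y - 1) / y * (\<Sum>S\<in>Pow V. wt p V S *
               (\<Prod>x\<in>V. (\<lambda>x b. if x \<in> ?N then exp (- y * (if b then 1 else -1)) else 1) x (x \<in> S)))"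
        by (simp add: sum_distrib_left algebra_simps)
      also have "(\<Sum>S\<in>Pow V. wt p V S *
               (\<Prod>x\<in>V. (\<lambda>x b. if x \<in> ?N then exp (- y * (if b then 1 else -1)) else 1) x (x \<in> S)))
          = (\<Prod>x\<in>V. p * (if x \<in> ?N then exp (- y * (if True then 1 else -1)) else 1) + (1 - p) * (if x \<in> ?N then exp (- y * (if False then 1 else -1)) else 1))"
        by (rule expect_prod[OF finV, where \<phi>="\<lambda>x b. if x \<in> ?N then exp (- y * (if b then 1 else -1)) else 1"])
      also have "\<dots> = (\<Prod>x\<in>V. if x \<in> ?N then q else 1)"
        by (intro prod.cong refl) (simp add: q_def)
      also have "\<dots> = q ^ card ?N"
        unfolding restr by simp
      finally have st1: "(\<Sum>S\<in>Pow V. wt p V S * real_of_int (c S v)) \<le> exp (2*y - 1) / y * q ^ card ?N" .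
      have "q ^ card ?N \<le> q ^ (\<delta> + 1)"
        by (rule power_decreasing[OF cardN[OF v] q0 q1])
      also have "q ^ (\<delta> + 1) \<le> exp (- (y^2/6)) ^ (\<delta> + 1)"
        using q0 qb exp_ge_add_one_self[of "- (y^2/6)"] by (intro power_mono) auto
      also have "exp (- (y^2/6)) ^ (\<delta> + 1) = exp (real (\<delta> + 1) * (- (y^2/6)))"
        by (rule exp_of_nat_mult[symmetric])
      also have "\<dots> = exp (- (y^2 * D / 6))"
        by (rule arg_cong[where f=exp]) (simp add: D_def algebra_simps)
      also have "\<dots> \<le> exp (- L)" using y2 L2 by simp
      also have "exp (- L) = 1 / D" unfolding L_def using Dpos by (simp add: exp_minus inverse_eq_divide)
      finally have qD: "q ^ card ?N \<le> 1 / D" .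
      have e1: "exp (2*y - 1) \<le> 1" using y5 by simp
      have "exp (2*y - 1) / y * q ^ card ?N \<le> 1 / y * q ^ card ?N"
        using e1 ypos q0 by (intro mult_right_mono divide_right_mono) auto
      also have "\<dots> \<le> 1 / y * (1 / D)"
        using qD ypos by (intro mult_left_mono) auto
      finally have st2: "exp (2*y - 1) / y * q ^ card ?N \<le> 1 / y * (1 / D)" .
      have "1 / y * (1 / D) = 1 / a / sqrt D"
        unfolding y_def using sD apos sDpos by (simp add: field_simps)
      also have "\<dots> \<le> 0.32 / sqrt D"
        using a3 apos sDpos by (intro divide_right_mono) (auto simp: field_simps)
      finally show ?thesis using st1 st2 by linarith
    qed
    have "(\<Sum>S\<in>Pow V. wt p V S * (real_of_int (gi S v) + real_of_int (c S v)))
        = (\<Sum>S\<in>Pow V. wt p V S * real_of_int (gi S v)) + (\<Sum>S\<in>Pow V. wt p V S * real_of_int (c S v))"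
      by (simp add: distrib_left sum.distrib)
    also have "\<dots> \<le> y + 0.32 / sqrt D" using i ii by simp
    also have "\<dots> = (a + 0.32) / sqrt D" unfolding y_def by (simp add: add_divide_distrib)
    finally show ?thesis .
  qed
  have avg: "(\<Sum>S\<in>Pow V. wt p V S * h S) \<le> B"
  proof -
    have "(\<Sum>S\<in>Pow V. wt p V S * h S)
        = (\<Sum>v\<in>V. \<Sum>S\<in>Pow V. wt p V S * (real_of_int (gi S v) + real_of_int (c S v)))"
      unfolding h_def by (simp add: sum_distrib_left sum.distrib sum.swap[of _ V] algebra_simps)
    also have "\<dots> \<le> (\<Sum>v\<in>V. (a + 0.32) / sqrt D)" by (rule sum_mono) (rule per_v)
    also have "\<dots> = B" unfolding B_def by simp
    finally show ?thesis .
  qed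
  obtain S where SV: "S \<subseteq> V" and hS: "h S \<le> B" using exists_le_avg[OF finV p01 avg] by blast
  obtain f where f: "signed_dom_fun V E f"
    "(\<Sum>v\<in>V. f v) \<le> (\<Sum>v\<in>V. gi S v) + (\<Sum>v\<in>V. c S v)"
    using fix_lemma[OF sg SV] unfolding gi_def c_def s_def by blast
  have "signed_domination_number V E \<le> (\<Sum>v\<in>V. gi S v) + (\<Sum>v\<in>V. c S v)"
    using sdn_le[OF finV f(1)] f(2) by linarith
  hence "real_of_int (signed_domination_number V E) \<le> h S" unfolding h_def by linarith
  also have "\<dots> \<le> B" by (rule hS)
  finally show ?thesis unfolding B_def a_def L_def D_def \<delta>_def .
qed

end
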